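(* Let $G$ be a graph on $n$ vertices and let $m,k$ be integers with $1\leq m<k\leq n$. If $\psi_k(G)>0$, then $\psi_m(G)\geq \psi_k(G)+\left\lfloor\frac{k}{m}\right\rfloor-1$.
   Context: All graphs are finite, simple and nonempty. For a graph $G$ and a positive integer $k$, a $k$-path vertex cover ($k$-PVC) of $G$ is a set $S$ of vertices such that every path on $k$ vertices in $G$ contains at least one vertex of $S$ (if $G$ has no path on $k$ vertices, the empty set is a $k$-PVC). $\psi_k(G)$ denotes the minimum cardinality of a $k$-PVC of $G$. *)

theory Defs
  imports Main
begin

definition simple_graph :: "'a set \<Rightarrow> ('a \<Rightarrow> 'a \<Rightarrow> bool) \<Rightarrow> bool" where
  "simple_graph V E \<longleftrightarrow> finite V \<and> V \<noteq> {} \<and>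
     (\<forall>u v. E u v \<longrightarrow> u \<in> V \<and> v \<in> V) \<and>
     (\<forall>u v. E u v \<longrightarrow> E v u) \<and> (\<forall>v. \<not> E v v)"

definition is_path :: "'a set \<Rightarrow> ('a \<Rightarrow> 'a \<Rightarrow> bool) \<Rightarrow> 'a list \<Rightarrow> bool" where
  "is_path V E p \<longleftrightarrow> distinct p \<and> set p \<subseteq> V \<and>
     (\<forall>i. Suc i < length p \<longrightarrow> E (p ! i) (p ! Suc i))"

definition is_kpvc :: "'a set \<Rightarrow> ('a \<Rightarrow> 'a \<Rightarrow> bool) \<Rightarrow> nat \<Rightarrow> 'a set \<Rightarrow> bool" where
  "is_kpvc V E k S \<longleftrightarrow> S \<subseteq> V \<and>
     (\<forall>p. is_path V E p \<and> length p = k \<longrightarrow> set p \<inter> S \<noteq> {})"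

definition psi :: "'a set \<Rightarrow> ('a \<Rightarrow> 'a \<Rightarrow> bool) \<Rightarrow> nat \<Rightarrow> nat" where
  "psi V E k = Min (card ` {S. is_kpvc V E k S})"

end

theory Submission
  imports Defs
begin

lemma path_sub:
  assumes "is_path V E Q" "a + l \<le> length Q"
  shows "is_path V E (take l (drop a Q)) \<and> length (take l (drop a Q)) = l"
proof -
  have "distinct (take l (drop a Q))" using assms(1) by (simp add: is_path_def)
  moreover have "set (take l (drop a Q)) \<subseteq> V" using assms(1) unfolding is_path_def
    by (meson order_trans set_drop_subset set_take_subset)
  moreover have "\<forall>i. Suc i < length (take l (drop a Q)) \<longrightarrow>
     E (take l (drop a Q) ! i) (take l (drop a Q) ! Suc i)"
  proof (intro allI impI)
    fix i assume "Suc i < length (take l (drop a Q))"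
    then have "Suc i < l" "a + Suc i < length Q" using assms(2) by auto
    then show "E (take l (drop a Q) ! i) (take l (drop a Q) ! Suc i)"
      using assms(1) unfolding is_path_def by (simp add: nth_take nth_drop)
  qed
  ultimately show ?thesis using assms(2) by (simp add: is_path_def)
qed

lemma kpvc_hit:
  assumes "is_kpvc V E m S" "is_path V E Q" "a + m \<le> length Q"
  shows "\<exists>j. a \<le> j \<and> j < a + m \<and> Q ! j \<in> S"
proof -
  have "set (take m (drop a Q)) \<inter> S \<noteq> {}"
    using assms path_sub[OF assms(2,3)] unfolding is_kpvc_def by blast
  then obtain x where "x \<in> set (take m (drop a Q))" "x \<in> S" by blast
  then obtain i where "i < length (take m (drop a Q))" "take m (drop a Q) ! i = x"
    by (metis in_set_conv_nth)
  then show ?thesis using assms(3) \<open>x \<in> S\<close>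
    by (intro exI[of _ "a + i"]) (auto simp: nth_take nth_drop)
qed

theorem mainTheorem5:
  fixes V :: "'a set" and E :: "'a \<Rightarrow> 'a \<Rightarrow> bool" and n m k :: nat
  assumes "simple_graph V E"
    and "card V = n"
    and "1 \<le> m" and "m < k" and "k \<le> n"
    and "psi V E k > 0"
  shows "psi V E m \<ge> psi V E k + k div m - 1"
proof -
  have finV: "finite V" using assms(1) by (simp add: simple_graph_def)
  have fin: "finite (card ` {S. is_kpvc V E j S})" for j
    by (rule finite_imageI, rule finite_subset[of _ "Pow V"]) (auto simp: is_kpvc_def finV)
  have Vc: "is_kpvc V E j V" if "j \<ge> 1" for j
    unfolding is_kpvc_def
  proof (intro conjI allI impI)
    fix p assume p: "is_path V E p \<and> length p = j"
    then have "p ! 0 \<in> set p" using that by simp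
    moreover have "set p \<subseteq> V" using p by (simp add: is_path_def)
    ultimately show "set p \<inter> V \<noteq> {}" by blast
  qed simp
  have "psi V E m \<in> card ` {S. is_kpvc V E m S}"
    unfolding psi_def using fin Vc[OF assms(3)] by (intro Min_in) auto
  then obtain S where S: "is_kpvc V E m S" "card S = psi V E m" by auto
  have Sk: "is_kpvc V E k S"
    unfolding is_kpvc_def
  proof (intro conjI allI impI)
    show "S \<subseteq> V" using S(1) by (simp add: is_kpvc_def)
    fix p assume p: "is_path V E p \<and> length p = k"
    then obtain j where "j < m" "p ! j \<in> S" using kpvc_hit[OF S(1), of p 0] assms(4) by auto
    then show "set p \<inter> S \<noteq> {}" using p assms(4) by (metis disjoint_iff nth_mem order.strict_trans)
  qed
  have finS: "finite S" using S(1) finV by (meson is_kpvc_def rev_finite_subset)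
  define C where "C = {T. T \<subseteq> S \<and> is_kpvc V E k T}"
  have "card ` C \<noteq> {}" using Sk by (auto simp: C_def)
  have finC: "finite C" unfolding C_def using finS by (rule rev_finite_subset[OF finite_Pow_iff[THEN iffD2]]) auto
  have "Min (card ` C) \<in> card ` C" using finC \<open>card ` C \<noteq> {}\<close> by (intro Min_in) auto
  then obtain T where T: "T \<in> C" "card T = Min (card ` C)" by auto
  have Tmin: "\<And>T'. T' \<in> C \<Longrightarrow> card T \<le> card T'"
    using T(2) finC by (auto intro!: Min_le)
  have TS: "T \<subseteq> S" and Tk: "is_kpvc V E k T" using T(1) by (auto simp: C_def)
  have "psi V E k \<le> card T" unfolding psi_def using fin Tk by (intro Min_le) auto
  then have "T \<noteq> {}" using assms(6) by auto
  then obtain t where t: "t \<in> T" by auto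
  have finT: "finite T" using TS finS finite_subset by blast
  have "\<not> is_kpvc V E k (T - {t})"
  proof
    assume "is_kpvc V E k (T - {t})"
    then have "T - {t} \<in> C" using TS by (auto simp: C_def)
    then have "card T \<le> card (T - {t})" by (rule Tmin)
    then show False using t finT card_gt_0_iff[of T] by (auto simp: card_Diff_singleton)
  qed
  then obtain Q where Q: "is_path V E Q" "length Q = k" "set Q \<inter> (T - {t}) = {}"
    using Tk unfolding is_kpvc_def by blast
  define q where "q = k div m"
  have qm: "q * m \<le> k" unfolding q_def by simp
  have "\<forall>i<q. \<exists>j. i*m \<le> j \<and> j < i*m + m \<and> Q ! j \<in> S"
  proof (intro allI impI)
    fix i assume "i < q"
    then have "i*m + m \<le> q*m" by (metis add.commute mult_Suc less_eq_Suc_le mult_le_mono1)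
    then show "\<exists>j. i*m \<le> j \<and> j < i*m + m \<and> Q ! j \<in> S"
      using kpvc_hit[OF S(1) Q(1)] qm Q(2) by auto
  qed
  then obtain g where g: "\<And>i. i < q \<Longrightarrow> i*m \<le> g i \<and> g i < i*m + m \<and> Q ! g i \<in> S"
    by metis
  define f where "f i = Q ! g i" for i
  have gk: "i < q \<Longrightarrow> g i < k" for i
  proof -
    assume "i < q"
    then have "i*m + m \<le> q*m" by (metis add.commute mult_Suc less_eq_Suc_le mult_le_mono1)
    then show ?thesis using g[OF \<open>i<q\<close>] qm by linarith
  qed
  have ginj: "inj_on g {..<q}"
  proof (rule inj_onI)
    fix i j assume ij: "i \<in> {..<q}" "j \<in> {..<q}" "g i = g j"
    show "i = j"
    proof (rule ccontr)
      assume "i \<noteq> j"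
      then consider "i < j" | "j < i" by linarith
      then show False
      proof cases
        case 1 then have "i*m + m \<le> j*m" by (metis add.commute mult_Suc less_eq_Suc_le mult_le_mono1)
        then show False using g[of i] g[of j] ij by auto
      next
        case 2 then have "j*m + m \<le> i*m" by (metis add.commute mult_Suc less_eq_Suc_le mult_le_mono1)
        then show False using g[of i] g[of j] ij by auto
      qed
    qed
  qed
  have finj: "inj_on f {..<q}"
  proof (rule inj_onI)
    fix i j assume ij: "i \<in> {..<q}" "j \<in> {..<q}" "f i = f j"
    then have "g i = g j" using gk Q(1,2) unfolding f_def is_path_def
      by (simp add: nth_eq_iff_index_eq)
    then show "i = j" using ginj ij by (meson inj_onD)
  qed
  have fsub: "f ` {..<q} \<subseteq> (S - T) \<union> {t}"
  proof
    fix x assume "x \<in> f ` {..<q}"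
    then obtain i where i: "i < q" "x = Q ! g i" by (auto simp: f_def)
    then have "x \<in> set Q" using gk Q(2) by auto
    then show "x \<in> (S - T) \<union> {t}" using Q(3) g[OF i(1)] i(2) by auto
  qed
  have "q = card (f ` {..<q})" using finj by (simp add: card_image)
  also have "\<dots> \<le> card ((S - T) \<union> {t})" using fsub finS by (intro card_mono) auto
  also have "\<dots> \<le> card (S - T) + 1" using card_Un_le[of "S - T" "{t}"] by simp
  finally have "q \<le> card (S - T) + 1" .
  moreover have "card S = card T + card (S - T)"
    using TS finS by (metis card_Diff_subset finT le_add_diff_inverse card_mono)
  ultimately show ?thesis using S(2) \<open>psi V E k \<le> card T\<close> unfolding q_def by linarith
qed

end
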